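(* Let $G$ be a split connected reductive group with maximal torus $T$, $M\subseteq G$ a Levi subgroup containing $T$, $\tilde W_M=X^*(T)\rtimes W_M$, and $W^M=\{w\in W:\ell(s_\alpha w)>\ell(w)\ \forall\alpha\in\Delta_M\}$. Let $\tilde z\in\tilde W_M$ and let $r\in\tilde W_M$ be an affine reflection with $\ell(\tilde z)<\ell(r\tilde z)$ (lengths in $\tilde W_M$). Then for every $w^M\in W^M$, $\ell((w^M)^{-1}\tilde zw^M)<\ell((w^M)^{-1}r\tilde zw^M)$ (lengths in $\tilde W$).
   Context: $W=W(G,T)$, $W_M=W(M,T)\subseteq W$, $\Delta_M$ the simple roots of $(M,B\cap M,T)$, $\tilde W=X^*(T)\rtimes W$. Length functions on $\tilde W$ (resp. $\tilde W_M$) are defined via the dominant base alcove $A_0$ of $G$ (resp. the dominant base alcove of $M$), extended to the extended affine Weyl group by $\ell(\tilde w\delta)=\ell(\tilde w)$ for $\delta$ in the stabilizer of the base alcove. Affine reflections are elements $s_\alpha t_{m\alpha}$, $m\in\mathbb Z$. *)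

theory Defs
  imports "HOL-Analysis.Analysis"
begin

text \<open>A split connected reductive group with maximal torus T is encoded by its (reduced)
root datum. V = X^*(T) \<otimes> R is modelled by a Euclidean space; the inner product
identifies V with its dual, so the cocharacter lattice is the dual lattice of X and
coroots are vectors of V paired with characters via the inner product.\<close>

definition is_lattice :: "'v::euclidean_space set \<Rightarrow> bool" where
  "is_lattice X \<longleftrightarrow> (\<exists>B. independent B \<and> span B = UNIV \<and>
      X = {x. \<exists>c::'v \<Rightarrow> int. x = (\<Sum>b\<in>B. of_int (c b) *\<^sub>R b)})"

definition refl :: "('v::real_inner \<Rightarrow> 'v) \<Rightarrow> 'v \<Rightarrow> 'v \<Rightarrow> 'v" where
  "refl cor \<alpha> x = x - (x \<bullet> cor \<alpha>) *\<^sub>R \<alpha>"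

definition corefl :: "('v::real_inner \<Rightarrow> 'v) \<Rightarrow> 'v \<Rightarrow> 'v \<Rightarrow> 'v" where
  "corefl cor \<alpha> y = y - (\<alpha> \<bullet> y) *\<^sub>R cor \<alpha>"

definition reduced_root_datum :: "'v::euclidean_space set \<Rightarrow> 'v set \<Rightarrow> ('v \<Rightarrow> 'v) \<Rightarrow> bool" where
  "reduced_root_datum X R cor \<longleftrightarrow> is_lattice X \<and> finite R \<and> R \<subseteq> X \<and> inj_on cor R \<and>
     (\<forall>\<alpha>\<in>R. (\<forall>x\<in>X. x \<bullet> cor \<alpha> \<in> \<int>) \<and> \<alpha> \<bullet> cor \<alpha> = 2 \<and>
         refl cor \<alpha> ` R = R \<and> corefl cor \<alpha> ` (cor ` R) = cor ` R \<and> 2 *\<^sub>R \<alpha> \<notin> R)"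

inductive_set weyl_group :: "('v::real_inner \<Rightarrow> 'v) \<Rightarrow> 'v set \<Rightarrow> ('v \<Rightarrow> 'v) set"
  for cor R where
  wid: "id \<in> weyl_group cor R"
| wstep: "w \<in> weyl_group cor R \<Longrightarrow> \<alpha> \<in> R \<Longrightarrow> refl cor \<alpha> \<circ> w \<in> weyl_group cor R"

definition ext_affine_weyl :: "('v::real_inner \<Rightarrow> 'v) \<Rightarrow> 'v set \<Rightarrow> 'v set \<Rightarrow> ('v \<Rightarrow> 'v) set" where
  "ext_affine_weyl cor X R = {(\<lambda>x. w x + l) | l w. l \<in> X \<and> w \<in> weyl_group cor R}"

definition affine_refl :: "('v::real_inner \<Rightarrow> 'v) \<Rightarrow> 'v \<Rightarrow> int \<Rightarrow> 'v \<Rightarrow> 'v" where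
  "affine_refl cor \<alpha> m = (\<lambda>x. refl cor \<alpha> (x + of_int m *\<^sub>R \<alpha>))"

text \<open>Positive system determined by a regular vector xi (choice of Borel B \<supseteq> T).\<close>
definition pos_roots :: "'v::real_inner set \<Rightarrow> 'v \<Rightarrow> 'v set" where
  "pos_roots R \<xi> = {\<alpha>\<in>R. 0 < \<alpha> \<bullet> \<xi>}"

definition simple_roots :: "'v::real_inner set \<Rightarrow> 'v set" where
  "simple_roots P = {\<alpha>\<in>P. \<not> (\<exists>\<beta>\<in>P. \<exists>\<gamma>\<in>P. \<alpha> = \<beta> + \<gamma>)}"

text \<open>Root system of the Levi subgroup M = Z_G(S) (centralizer of a subtorus),
S given by (real spans of) cocharacters.\<close>
definition levi_roots :: "'v::real_inner set \<Rightarrow> 'v set \<Rightarrow> 'v set" where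
  "levi_roots R S = {\<alpha>\<in>R. \<forall>y\<in>S. \<alpha> \<bullet> y = 0}"

definition base_alcove :: "('v::real_inner \<Rightarrow> 'v) \<Rightarrow> 'v set \<Rightarrow> 'v set" where
  "base_alcove cor P = {x. \<forall>\<alpha>\<in>P. 0 < x \<bullet> cor \<alpha> \<and> x \<bullet> cor \<alpha> < 1}"

definition separates :: "('v::real_inner \<Rightarrow> 'v) \<Rightarrow> 'v set \<Rightarrow> 'v set \<Rightarrow> 'v \<Rightarrow> int \<Rightarrow> bool" where
  "separates cor A B \<alpha> k \<longleftrightarrow>
     (\<exists>a\<in>A. \<exists>b\<in>B. (a \<bullet> cor \<alpha> - of_int k) * (b \<bullet> cor \<alpha> - of_int k) < 0)"

definition alcove_length :: "('v::real_inner \<Rightarrow> 'v) \<Rightarrow> 'v set \<Rightarrow> ('v \<Rightarrow> 'v) \<Rightarrow> nat" where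
  "alcove_length cor P f =
     card {(\<alpha>, k). \<alpha> \<in> P \<and> separates cor (base_alcove cor P) (f ` base_alcove cor P) \<alpha> k}"

end

theory Submission
  imports Defs
begin
lemma sign_key:
  fixes A1 B1 ha hb lam :: real
  assumes "A1 \<noteq> 0" "ha > 0" "hb > 0" "A1 * B1 < 0" "\<not> (A1 * (B1 - lam * hb) < 0)"
  shows "(A1 - lam * ha) * B1 < 0 \<and> \<not> ((A1 - lam * ha) * (B1 - lam * hb) < 0)"
proof -
  consider "lam > 0" | "lam < 0" | "lam = 0" by linarith
  then show ?thesis
  proof cases
    case 1
    have p: "lam * ha > 0" "lam * hb > 0" using 1 assms by auto
    show ?thesis
    proof (cases "A1 > 0")
      case True
      then have "B1 < 0" using assms(4) by (simp add: mult_less_0_iff)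
      then have "B1 - lam * hb < 0" using p by linarith
      then have False using True assms(5) by (simp add: mult_pos_neg)
      then show ?thesis ..
    next
      case False
      then have a: "A1 < 0" using assms(1) by linarith
      then have b: "B1 > 0" using assms(4) by (simp add: mult_less_0_iff)
      have c: "B1 - lam * hb \<le> 0" using a assms(5) by (auto simp: mult_less_0_iff)
      have d: "A1 - lam * ha < 0" using a p by linarith
      show ?thesis using b c d by (auto simp: mult_less_0_iff)
    qed
  next
    case 2
    have p: "lam * ha < 0" "lam * hb < 0" using 2 assms by (auto simp: mult_neg_pos)
    show ?thesis
    proof (cases "A1 < 0")
      case True
      then have "B1 > 0" using assms(4) by (simp add: mult_less_0_iff)
      then have "B1 - lam * hb > 0" using p by linarith
      then have False using True assms(5) by (simp add: mult_neg_pos)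
      then show ?thesis ..
    next
      case False
      then have a: "A1 > 0" using assms(1) by linarith
      then have b: "B1 < 0" using assms(4) by (simp add: mult_less_0_iff)
      have c: "B1 - lam * hb \<ge> 0" using a assms(5) by (auto simp: mult_less_0_iff)
      have d: "A1 - lam * ha > 0" using a p by linarith
      show ?thesis using b c d by (auto simp: mult_less_0_iff)
    qed
  next
    case 3 then show ?thesis using assms by simp
  qed
qed

lemma abstract_count:
  fixes ev :: "'i \<Rightarrow> 'v \<Rightarrow> real" and \<sigma> :: "'i \<Rightarrow> 'i" and r :: "'v \<Rightarrow> 'v"
    and h :: "'v \<Rightarrow> real" and lam :: "'i \<Rightarrow> real"
  assumes \<sigma>I: "\<And>i. i \<in> I \<Longrightarrow> \<sigma> i \<in> I"
    and \<sigma>\<sigma>: "\<And>i. i \<in> I \<Longrightarrow> \<sigma> (\<sigma> i) = i"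
    and ev\<sigma>: "\<And>i x. i \<in> I \<Longrightarrow> ev (\<sigma> i) x = ev i (r x)"
    and evr: "\<And>i x. i \<in> I \<Longrightarrow> ev i (r x) = ev i x - lam i * h x"
    and rr: "r (r b) = b"
    and hr: "\<And>x. h (r x) = - h x"
    and hz: "hz \<in> I" "\<And>x. ev hz x = h x"
    and nhz: "nhz \<in> I" "\<And>x. ev nhz x = - h x"
    and gen: "\<And>i. i \<in> I \<Longrightarrow> ev i a \<noteq> 0"
    and ha: "h a > 0" and hb: "h b > 0"
    and fin: "finite {i\<in>I. ev i a * ev i (r b) < 0}"
  shows "card {i\<in>I. ev i a * ev i b < 0} + 2 \<le> card {i\<in>I. ev i a * ev i (r b) < 0}"
proof -
  define S1 where "S1 = {i\<in>I. ev i a * ev i b < 0}"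
  define S2 where "S2 = {i\<in>I. ev i a * ev i (r b) < 0}"
  define \<iota> where "\<iota> i = (if i \<in> S2 then i else \<sigma> i)" for i
  have key: "\<sigma> i \<in> S2 \<and> \<sigma> i \<notin> S1" if "i \<in> S1" "i \<notin> S2" for i
  proof -
    have iI: "i \<in> I" using that S1_def by auto
    have "(ev i a - lam i * h a) * ev i b < 0 \<and> \<not> ((ev i a - lam i * h a) * (ev i b - lam i * h b) < 0)"
      apply (rule sign_key[OF gen[OF iI] ha hb])
      using that iI by (auto simp: S1_def S2_def evr)
    moreover have "ev (\<sigma> i) a = ev i a - lam i * h a" "ev (\<sigma> i) (r b) = ev i b"
      "ev (\<sigma> i) b = ev i b - lam i * h b"
      using iI by (auto simp: ev\<sigma> evr rr)
    ultimately show ?thesis using \<sigma>I[OF iI] by (auto simp: S1_def S2_def)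
  qed
  have hab: "h a * h b > 0" using ha hb by simp
  have hS1: "hz \<notin> S1" "nhz \<notin> S1" using hab hz nhz by (auto simp: S1_def)
  have hS2: "hz \<in> S2" "nhz \<in> S2" using ha hb hz nhz hr rr
    by (auto simp: S2_def mult_pos_neg)
  have hne: "hz \<noteq> nhz"
  proof
    assume "hz = nhz"
    then have "h a = - h a" using hz(2)[of a] nhz(2)[of a] by simp
    then show False using ha by simp
  qed
  have sub: "\<iota> ` S1 \<subseteq> S2 - {hz, nhz}"
  proof
    fix y assume "y \<in> \<iota> ` S1"
    then obtain i where i: "i \<in> S1" "y = \<iota> i" by auto
    have iI: "i \<in> I" using i S1_def by auto
    show "y \<in> S2 - {hz, nhz}"
    proof (cases "i \<in> S2")
      case True
      then show ?thesis using i hS1 by (auto simp: \<iota>_def)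
    next
      case False
      have y: "y = \<sigma> i" using False i by (auto simp: \<iota>_def)
      have "y \<in> S2" using key[OF i(1) False] y by simp
      moreover have "y \<noteq> hz"
      proof
        assume "y = hz"
        have "ev i x = - h x" for x
        proof -
          have "ev i x = ev (\<sigma> (\<sigma> i)) x" using \<sigma>\<sigma>[OF iI] by simp
          also have "\<dots> = ev (\<sigma> i) (r x)" using ev\<sigma>[OF \<sigma>I[OF iI]] by simp
          also have "\<dots> = h (r x)" using \<open>y = hz\<close> y hz(2) by simp
          finally show ?thesis using hr by simp
        qed
        then show False using i(1) hab by (auto simp: S1_def)
      qed
      moreover have "y \<noteq> nhz"
      proof
        assume "y = nhz"
        have "ev i x = h x" for x
        proof -
          have "ev i x = ev (\<sigma> (\<sigma> i)) x" using \<sigma>\<sigma>[OF iI] by simp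
          also have "\<dots> = ev (\<sigma> i) (r x)" using ev\<sigma>[OF \<sigma>I[OF iI]] by simp
          also have "\<dots> = - h (r x)" using \<open>y = nhz\<close> y nhz(2) by simp
          finally show ?thesis using hr by simp
        qed
        then show False using i(1) hab by (auto simp: S1_def)
      qed
      ultimately show ?thesis by auto
    qed
  qed
  have inj: "inj_on \<iota> S1"
  proof
    fix i j assume ij: "i \<in> S1" "j \<in> S1" "\<iota> i = \<iota> j"
    have iI: "i \<in> I" "j \<in> I" using ij S1_def by auto
    show "i = j"
    proof (cases "i \<in> S2"; cases "j \<in> S2")
      assume "i \<in> S2" "j \<in> S2" then show ?thesis using ij by (simp add: \<iota>_def)
    next
      assume a: "i \<in> S2" "j \<notin> S2"
      then have "i = \<sigma> j" using ij by (simp add: \<iota>_def)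
      then show ?thesis using key[OF ij(2) a(2)] ij(1) by simp
    next
      assume a: "i \<notin> S2" "j \<in> S2"
      then have "j = \<sigma> i" using ij by (simp add: \<iota>_def)
      then show ?thesis using key[OF ij(1) a(1)] ij(2) by simp
    next
      assume a: "i \<notin> S2" "j \<notin> S2"
      then have "\<sigma> i = \<sigma> j" using ij by (simp add: \<iota>_def)
      then show ?thesis using \<sigma>\<sigma> iI by metis
    qed
  qed
  have finS2: "finite S2" using fin S2_def by simp
  have "card S1 = card (\<iota> ` S1)" using inj by (simp add: card_image)
  also have "\<dots> \<le> card (S2 - {hz, nhz})" using sub finS2 by (intro card_mono) auto
  also have "\<dots> = card S2 - 2" using hS2 hne finS2 by (simp add: card_Diff_subset)
  finally have "card S1 \<le> card S2 - 2" .
  moreover have "card S2 \<ge> 2"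
  proof -
    have "card {hz, nhz} \<le> card S2" using hS2 finS2 by (intro card_mono) auto
    then show ?thesis using hne by simp
  qed
  ultimately show ?thesis unfolding S1_def S2_def by linarith
qed

lemma lemmaU:
  fixes C :: "'v::real_inner set"
  assumes fin: "finite C" and gd: "\<gamma> \<bullet> d = 2" and ge: "\<gamma> \<bullet> e = 2" and dC: "d \<in> C"
    and mapd: "\<And>y. y \<in> C \<Longrightarrow> y - (\<gamma> \<bullet> y) *\<^sub>R d \<in> C"
    and mape: "\<And>y. y \<in> C \<Longrightarrow> y - (\<gamma> \<bullet> y) *\<^sub>R e \<in> C"
  shows "d = e"
proof (rule ccontr)
  assume ne: "d \<noteq> e"
  have step: "y + (\<gamma> \<bullet> y) *\<^sub>R (d - e) \<in> C" if "y \<in> C" for y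
  proof -
    define y1 where "y1 = y - (\<gamma> \<bullet> y) *\<^sub>R e"
    have y1C: "y1 \<in> C" using mape[OF that] y1_def by simp
    have g1: "\<gamma> \<bullet> y1 = - (\<gamma> \<bullet> y)" using ge by (simp add: y1_def inner_diff_right)
    have "y1 - (\<gamma> \<bullet> y1) *\<^sub>R d \<in> C" using mapd[OF y1C] .
    also have "y1 - (\<gamma> \<bullet> y1) *\<^sub>R d = y1 + (\<gamma> \<bullet> y) *\<^sub>R d"
      using g1 by simp
    also have "\<dots> = y + (\<gamma> \<bullet> y) *\<^sub>R (d - e)"
      by (simp add: y1_def algebra_simps)
    finally show ?thesis .
  qed
  have it: "d + (real n * 2) *\<^sub>R (d - e) \<in> C" for n
  proof (induction n)
    case 0 then show ?case using dC by simp
  next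
    case (Suc n)
    let ?y = "d + (real n * 2) *\<^sub>R (d - e)"
    have g: "\<gamma> \<bullet> ?y = 2" using gd ge by (simp add: inner_add_right inner_diff_right)
    have "?y + (\<gamma> \<bullet> ?y) *\<^sub>R (d - e) \<in> C" using step[OF Suc] .
    also have "?y + (\<gamma> \<bullet> ?y) *\<^sub>R (d - e) = d + (real (Suc n) * 2) *\<^sub>R (d - e)"
      using g by (simp add: algebra_simps)
    finally show ?case .
  qed
  have inj: "inj (\<lambda>n::nat. d + (real n * 2) *\<^sub>R (d - e))"
  proof (rule injI)
    fix m n :: nat assume "d + (real m * 2) *\<^sub>R (d - e) = d + (real n * 2) *\<^sub>R (d - e)"
    then have "(real m * 2) *\<^sub>R (d - e) = (real n * 2) *\<^sub>R (d - e)" by simp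
    then have "real m * 2 = real n * 2" using ne by (simp add: scaleR_cancel_right)
    then show "m = n" by simp
  qed
  have "range (\<lambda>n::nat. d + (real n * 2) *\<^sub>R (d - e)) \<subseteq> C" using it by auto
  then have "finite (range (\<lambda>n::nat. d + (real n * 2) *\<^sub>R (d - e)))" using fin finite_subset by blast
  then have "finite (UNIV :: nat set)" using inj finite_imageD by blast
  then show False by simp
qed

locale rd =
  fixes X R :: "'v::euclidean_space set" and cor :: "'v \<Rightarrow> 'v"
  assumes datum: "reduced_root_datum X R cor"
begin

lemma finR: "finite R" and RX: "R \<subseteq> X" and injcor: "inj_on cor R"
  using datum by (auto simp: reduced_root_datum_def)

lemma intX: "\<alpha> \<in> R \<Longrightarrow> x \<in> X \<Longrightarrow> x \<bullet> cor \<alpha> \<in> \<int>"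
  and two: "\<alpha> \<in> R \<Longrightarrow> \<alpha> \<bullet> cor \<alpha> = 2"
  and reflR: "\<alpha> \<in> R \<Longrightarrow> refl cor \<alpha> ` R = R"
  and coreflC: "\<alpha> \<in> R \<Longrightarrow> corefl cor \<alpha> ` (cor ` R) = cor ` R"
  using datum by (auto simp: reduced_root_datum_def)

lemma intR: "\<alpha> \<in> R \<Longrightarrow> \<gamma> \<in> R \<Longrightarrow> \<gamma> \<bullet> cor \<alpha> \<in> \<int>"
  using intX RX by auto

lemma refl_refl: "\<alpha> \<in> R \<Longrightarrow> refl cor \<alpha> (refl cor \<alpha> x) = x"
  using two[of \<alpha>] by (simp add: refl_def inner_diff_left algebra_simps)

lemma corefl_corefl: "\<alpha> \<in> R \<Longrightarrow> corefl cor \<alpha> (corefl cor \<alpha> x) = x"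
  using two[of \<alpha>] by (simp add: corefl_def inner_diff_right algebra_simps)

lemma refl_transpose: "refl cor \<alpha> x \<bullet> y = x \<bullet> corefl cor \<alpha> y"
  by (simp add: refl_def corefl_def inner_diff_left inner_diff_right algebra_simps)

lemma reflR_mem: "\<alpha> \<in> R \<Longrightarrow> \<gamma> \<in> R \<Longrightarrow> refl cor \<alpha> \<gamma> \<in> R"
  using reflR by blast

lemma coreflC_mem: "\<alpha> \<in> R \<Longrightarrow> c \<in> cor ` R \<Longrightarrow> corefl cor \<alpha> c \<in> cor ` R"
  using coreflC by blast

lemma neg_root: "\<alpha> \<in> R \<Longrightarrow> - \<alpha> \<in> R"
proof -
  assume a: "\<alpha> \<in> R"
  have "refl cor \<alpha> \<alpha> = - \<alpha>" using two[OF a] by (simp add: refl_def scaleR_2)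
  then show ?thesis using reflR_mem[OF a a] by simp
qed

lemma finC: "finite (cor ` R)" using finR by simp

lemma cor_neg: assumes a: "\<alpha> \<in> R" shows "cor (- \<alpha>) = - cor \<alpha>"
proof (rule lemmaU[OF finC, of "- \<alpha>"])
  show "- \<alpha> \<bullet> cor (- \<alpha>) = 2" using two[OF neg_root[OF a]] .
  show "- \<alpha> \<bullet> - cor \<alpha> = 2" using two[OF a] by simp
  show "cor (- \<alpha>) \<in> cor ` R" using neg_root[OF a] by simp
  fix y assume y: "y \<in> cor ` R"
  show "y - (- \<alpha> \<bullet> y) *\<^sub>R cor (- \<alpha>) \<in> cor ` R"
    using coreflC_mem[OF neg_root[OF a] y] by (simp add: corefl_def)
  show "y - (- \<alpha> \<bullet> y) *\<^sub>R - cor \<alpha> \<in> cor ` R"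
    using coreflC_mem[OF a y] by (simp add: corefl_def)
qed

lemma cor_refl: assumes a: "\<alpha> \<in> R" and g: "\<gamma> \<in> R"
  shows "cor (refl cor \<alpha> \<gamma>) = corefl cor \<alpha> (cor \<gamma>)"
proof (rule lemmaU[OF finC, of "refl cor \<alpha> \<gamma>"])
  have g': "refl cor \<alpha> \<gamma> \<in> R" using reflR_mem[OF a g] .
  show "refl cor \<alpha> \<gamma> \<bullet> cor (refl cor \<alpha> \<gamma>) = 2" using two[OF g'] .
  show "refl cor \<alpha> \<gamma> \<bullet> corefl cor \<alpha> (cor \<gamma>) = 2"
    by (simp add: refl_transpose corefl_corefl[OF a] two[OF g])
  show "cor (refl cor \<alpha> \<gamma>) \<in> cor ` R" using g' by simp
  fix y assume y: "y \<in> cor ` R"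
  show "y - (refl cor \<alpha> \<gamma> \<bullet> y) *\<^sub>R cor (refl cor \<alpha> \<gamma>) \<in> cor ` R"
    using coreflC_mem[OF g' y] by (simp add: corefl_def)
  have "corefl cor \<alpha> (corefl cor \<gamma> (corefl cor \<alpha> y)) = y - (refl cor \<alpha> \<gamma> \<bullet> y) *\<^sub>R corefl cor \<alpha> (cor \<gamma>)"
  proof -
    have e1: "\<gamma> \<bullet> corefl cor \<alpha> y = refl cor \<alpha> \<gamma> \<bullet> y" by (simp add: refl_transpose)
    have "corefl cor \<alpha> (corefl cor \<gamma> (corefl cor \<alpha> y))
        = corefl cor \<alpha> (corefl cor \<alpha> y - (\<gamma> \<bullet> corefl cor \<alpha> y) *\<^sub>R cor \<gamma>)"
      by (simp add: corefl_def)
    also have "\<dots> = corefl cor \<alpha> (corefl cor \<alpha> y) - (\<gamma> \<bullet> corefl cor \<alpha> y) *\<^sub>R corefl cor \<alpha> (cor \<gamma>)"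
      by (simp add: corefl_def inner_diff_right algebra_simps)
    finally show ?thesis using e1 corefl_corefl[OF a] by simp
  qed
  moreover have "corefl cor \<alpha> (corefl cor \<gamma> (corefl cor \<alpha> y)) \<in> cor ` R"
    using coreflC_mem[OF a] coreflC_mem[OF g] y by blast
  ultimately show "y - (refl cor \<alpha> \<gamma> \<bullet> y) *\<^sub>R corefl cor \<alpha> (cor \<gamma>) \<in> cor ` R" by simp
qed

end

context rd begin

definition closedQ :: "'v set \<Rightarrow> bool" where
  "closedQ Q \<longleftrightarrow> Q \<subseteq> R \<and> (\<forall>\<alpha>\<in>Q. - \<alpha> \<in> Q) \<and> (\<forall>\<alpha>\<in>Q. \<forall>\<gamma>\<in>Q. refl cor \<alpha> \<gamma> \<in> Q)"

lemma closedR: "closedQ R"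
  using neg_root reflR_mem by (auto simp: closedQ_def)

lemma closed_levi: "closedQ (levi_roots R S)"
proof -
  have "refl cor \<alpha> \<gamma> \<bullet> y = 0" if "\<alpha> \<bullet> y = 0" "\<gamma> \<bullet> y = 0" for \<alpha> \<gamma> y
    using that by (simp add: refl_def inner_diff_left)
  then show ?thesis using neg_root reflR_mem by (auto simp: closedQ_def levi_roots_def)
qed

lemma closedQ_sub: "closedQ Q \<Longrightarrow> \<alpha> \<in> Q \<Longrightarrow> \<alpha> \<in> R"
  by (auto simp: closedQ_def)

lemma corefl_Q: assumes Q: "closedQ Q" and a: "\<alpha> \<in> Q" and c: "c \<in> cor ` Q"
  shows "corefl cor \<alpha> c \<in> cor ` Q"
proof -
  obtain \<gamma> where g: "\<gamma> \<in> Q" "c = cor \<gamma>" using c by auto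
  have "corefl cor \<alpha> c = cor (refl cor \<alpha> \<gamma>)"
    using cor_refl[of \<alpha> \<gamma>] closedQ_sub[OF Q a] closedQ_sub[OF Q g(1)] g by simp
  moreover have "refl cor \<alpha> \<gamma> \<in> Q" using Q a g by (auto simp: closedQ_def)
  ultimately show ?thesis by simp
qed

lemma neg_Q: assumes Q: "closedQ Q" and c: "c \<in> cor ` Q" shows "- c \<in> cor ` Q"
proof -
  obtain \<gamma> where g: "\<gamma> \<in> Q" "c = cor \<gamma>" using c by auto
  have "- c = cor (- \<gamma>)" using cor_neg closedQ_sub[OF Q g(1)] g by simp
  moreover have "- \<gamma> \<in> Q" using Q g by (auto simp: closedQ_def)
  ultimately show ?thesis by simp
qed

lemma linear_refl: "linear (refl cor \<alpha>)"
  by (rule linearI) (simp_all add: refl_def inner_add_left algebra_simps)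

lemma weyl_props:
  assumes Q: "closedQ Q" and w: "w \<in> weyl_group cor Q"
  shows "linear w \<and> inj w \<and> surj w \<and> (\<forall>c\<in>cor ` Q. \<exists>c'\<in>cor ` Q. \<forall>x. w x \<bullet> c = x \<bullet> c')"
  using w
proof induction
  case wid
  have "linear (id :: 'v \<Rightarrow> 'v)" by (rule linear_id)
  then show ?case by (auto simp: id_def)
next
  case (wstep w \<alpha>)
  have aR: "\<alpha> \<in> R" using closedQ_sub[OF Q wstep(2)] .
  have l: "linear (refl cor \<alpha> \<circ> w)" using wstep linear_refl linear_compose by blast
  have ir: "inj (refl cor \<alpha>)"
  proof (rule injI)
    fix x y assume "refl cor \<alpha> x = refl cor \<alpha> y"
    then have "refl cor \<alpha> (refl cor \<alpha> x) = refl cor \<alpha> (refl cor \<alpha> y)" by simp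
    then show "x = y" by (simp add: refl_refl[OF aR])
  qed
  have sr: "surj (refl cor \<alpha>)"
  proof (rule surjI)
    fix x show "refl cor \<alpha> (refl cor \<alpha> x) = x" by (rule refl_refl[OF aR])
  qed
  have i: "inj (refl cor \<alpha> \<circ> w)" using wstep ir inj_compose by blast
  have s: "surj (refl cor \<alpha> \<circ> w)" by (rule comp_surj) (use wstep sr in auto)
  have t: "\<forall>c\<in>cor ` Q. \<exists>c'\<in>cor ` Q. \<forall>x. (refl cor \<alpha> \<circ> w) x \<bullet> c = x \<bullet> c'"
  proof
    fix c assume c: "c \<in> cor ` Q"
    have c2: "corefl cor \<alpha> c \<in> cor ` Q" using corefl_Q[OF Q wstep(2) c] .
    then obtain c' where "c' \<in> cor ` Q" "\<forall>x. w x \<bullet> corefl cor \<alpha> c = x \<bullet> c'" using wstep by blast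
    then show "\<exists>c'\<in>cor ` Q. \<forall>x. (refl cor \<alpha> \<circ> w) x \<bullet> c = x \<bullet> c'"
      by (auto simp: refl_transpose)
  qed
  show ?case using l i s t by blast
qed

lemma weyl_mono: assumes "Q \<subseteq> R'" "w \<in> weyl_group cor Q" shows "w \<in> weyl_group cor R'"
  using assms(2)
proof induction
  case wid then show ?case by (rule weyl_group.wid)
next
  case (wstep w \<alpha>)
  have "\<alpha> \<in> R'" using wstep(2) assms(1) by blast
  then show ?case by (rule weyl_group.wstep[OF wstep.IH])
qed

definition good :: "'v set \<Rightarrow> ('v \<Rightarrow> 'v) \<Rightarrow> bool" where
  "good Q g \<longleftrightarrow> (\<forall>c\<in>cor ` Q. \<forall>k::int. \<exists>c'\<in>cor ` Q. \<exists>k'::int.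
      \<forall>x. g x \<bullet> c - of_int k = x \<bullet> c' - of_int k')"

lemma good_comp: assumes f: "good Q f" and g: "good Q g" shows "good Q (f \<circ> g)"
  unfolding good_def
proof (intro ballI allI)
  fix c k assume c: "c \<in> cor ` Q"
  obtain c1 k1 where 1: "c1 \<in> cor ` Q" "\<forall>x. f x \<bullet> c - of_int k = x \<bullet> c1 - of_int k1"
    using f c unfolding good_def by blast
  obtain c2 k2 where 2: "c2 \<in> cor ` Q" "\<forall>x. g x \<bullet> c1 - of_int k1 = x \<bullet> c2 - of_int k2"
    using g 1(1) unfolding good_def by blast
  have "\<forall>x. (f \<circ> g) x \<bullet> c - of_int k = x \<bullet> c2 - of_int k2" using 1 2 by simp
  then show "\<exists>c'\<in>cor ` Q. \<exists>k'::int. \<forall>x. (f \<circ> g) x \<bullet> c - of_int k = x \<bullet> c' - of_int k'"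
    using 2(1) by blast
qed

lemma good_weyl: assumes "closedQ Q" "w \<in> weyl_group cor Q" shows "good Q w"
  unfolding good_def
proof (intro ballI allI)
  fix c k assume c: "c \<in> cor ` Q"
  obtain c' where "c' \<in> cor ` Q" "\<forall>x. w x \<bullet> c = x \<bullet> c'" using weyl_props[OF assms] c by blast
  then show "\<exists>c'\<in>cor ` Q. \<exists>k'::int. \<forall>x. w x \<bullet> c - of_int k = x \<bullet> c' - of_int k'" by auto
qed

lemma int_pair: "\<alpha> \<in> R \<Longrightarrow> c \<in> cor ` R \<Longrightarrow> \<exists>n::int. \<alpha> \<bullet> c = of_int n"
  using intR by (auto elim!: Ints_cases)

lemma intX_pair: "l \<in> X \<Longrightarrow> c \<in> cor ` R \<Longrightarrow> \<exists>n::int. l \<bullet> c = of_int n"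
  using intX by (auto elim!: Ints_cases)

lemma good_ext: assumes Q: "closedQ Q" and z: "z \<in> ext_affine_weyl cor X Q" shows "good Q z"
proof -
  obtain l u where z: "z = (\<lambda>x. u x + l)" "l \<in> X" "u \<in> weyl_group cor Q"
    using z by (auto simp: ext_affine_weyl_def)
  show ?thesis unfolding good_def
  proof (intro ballI allI)
    fix c k assume c: "c \<in> cor ` Q"
    obtain c' where c': "c' \<in> cor ` Q" "\<forall>x. u x \<bullet> c = x \<bullet> c'" using weyl_props[OF Q z(3)] c by blast
    have "c \<in> cor ` R" using c Q by (auto simp: closedQ_def)
    then obtain n where n: "l \<bullet> c = of_int n" using intX_pair z(2) by blast
    have "\<forall>x. z x \<bullet> c - of_int k = x \<bullet> c' - of_int (k - n)"
      using c' n z(1) by (simp add: inner_add_left)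
    then show "\<exists>c'\<in>cor ` Q. \<exists>k'::int. \<forall>x. z x \<bullet> c - of_int k = x \<bullet> c' - of_int k'"
      using c' by blast
  qed
qed

lemma scale_split: fixes a m :: real and v :: "'w::real_vector"
  shows "(a + 2 * m) *\<^sub>R v = (a + m) *\<^sub>R v + m *\<^sub>R v"
proof -
  have "a + 2 * m = (a + m) + m" by simp
  then show ?thesis by (metis scaleR_add_left)
qed

lemma affine_refl_eq: assumes a: "\<alpha> \<in> R"
  shows "affine_refl cor \<alpha> m x = x - (x \<bullet> cor \<alpha> + of_int m) *\<^sub>R \<alpha>"
proof -
  have e: "(x + of_int m *\<^sub>R \<alpha>) \<bullet> cor \<alpha> = x \<bullet> cor \<alpha> + 2 * of_int m"
    using two[OF a] by (simp add: inner_add_left)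
  have "affine_refl cor \<alpha> m x = (x + of_int m *\<^sub>R \<alpha>) - (x \<bullet> cor \<alpha> + 2 * of_int m) *\<^sub>R \<alpha>"
    by (simp add: affine_refl_def refl_def e)
  also have "\<dots> = (x + of_int m *\<^sub>R \<alpha>) - ((x \<bullet> cor \<alpha> + of_int m) *\<^sub>R \<alpha> + of_int m *\<^sub>R \<alpha>)"
    by (simp only: scale_split)
  also have "\<dots> = x - (x \<bullet> cor \<alpha> + of_int m) *\<^sub>R \<alpha>"
    by (rule add_diff_cancel_right)
  finally show ?thesis .
qed

lemma good_aref: assumes Q: "closedQ Q" and a: "\<alpha> \<in> Q" shows "good Q (affine_refl cor \<alpha> m)"
  unfolding good_def
proof (intro ballI allI)
  fix c k assume c: "c \<in> cor ` Q"
  have c2: "corefl cor \<alpha> c \<in> cor ` Q" using corefl_Q[OF Q a c] .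
  have "\<alpha> \<in> R" "corefl cor \<alpha> c \<in> cor ` R" using Q a c2 by (auto simp: closedQ_def)
  then obtain n where n: "\<alpha> \<bullet> corefl cor \<alpha> c = of_int n" using int_pair by blast
  have "affine_refl cor \<alpha> m x \<bullet> c - of_int k = x \<bullet> corefl cor \<alpha> c - of_int (k - m * n)" for x
  proof -
    have "affine_refl cor \<alpha> m x \<bullet> c = (x + of_int m *\<^sub>R \<alpha>) \<bullet> corefl cor \<alpha> c"
      by (simp add: affine_refl_def refl_transpose)
    also have "\<dots> = x \<bullet> corefl cor \<alpha> c + of_int m * of_int n" by (simp add: inner_add_left n)
    finally show ?thesis by simp
  qed
  then show "\<exists>c'\<in>cor ` Q. \<exists>k'::int. \<forall>x. affine_refl cor \<alpha> m x \<bullet> c - of_int k = x \<bullet> c' - of_int k'"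
    using c2 by blast
qed

lemma weyl_transpose_surj:
  assumes Q: "closedQ Q" and w: "w \<in> weyl_group cor Q" and c: "c \<in> cor ` Q"
  shows "\<exists>d\<in>cor ` Q. \<forall>x. w x \<bullet> d = x \<bullet> c"
proof -
  have wp: "linear w" "inj w" "surj w" "\<forall>c\<in>cor ` Q. \<exists>c'\<in>cor ` Q. \<forall>x. w x \<bullet> c = x \<bullet> c'"
    using weyl_props[OF Q w] by auto
  define f where "f d = (SOME c'. c' \<in> cor ` Q \<and> (\<forall>x. w x \<bullet> d = x \<bullet> c'))" for d
  have f: "f d \<in> cor ` Q \<and> (\<forall>x. w x \<bullet> d = x \<bullet> f d)" if "d \<in> cor ` Q" for d
  proof -
    have "\<exists>c'. c' \<in> cor ` Q \<and> (\<forall>x. w x \<bullet> d = x \<bullet> c')" using wp(4) that by blast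
    then show ?thesis unfolding f_def by (rule someI_ex)
  qed
  have inj: "inj_on f (cor ` Q)"
  proof
    fix d1 d2 assume d: "d1 \<in> cor ` Q" "d2 \<in> cor ` Q" "f d1 = f d2"
    have "\<forall>x. w x \<bullet> d1 = w x \<bullet> d2" using f[OF d(1)] f[OF d(2)] d(3) by simp
    have "y \<bullet> d1 = y \<bullet> d2" for y
    proof -
      obtain x where "y = w x" using wp(3) by blast
      then show ?thesis using \<open>\<forall>x. w x \<bullet> d1 = w x \<bullet> d2\<close> by simp
    qed
    then have "(d1 - d2) \<bullet> (d1 - d2) = 0" by (simp add: inner_diff_right inner_diff_left)
    then show "d1 = d2" by simp
  qed
  have sub: "f ` cor ` Q \<subseteq> cor ` Q" using f by blast
  have "Q \<subseteq> R" using Q by (simp add: closedQ_def)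
  then have finQ: "finite (cor ` Q)" using finR finite_subset by blast
  have "card (f ` cor ` Q) = card (cor ` Q)" using inj by (rule card_image)
  then have "f ` cor ` Q = cor ` Q"
    using sub finQ by (intro card_subset_eq) auto
  then obtain d where d: "d \<in> cor ` Q" "f d = c" using c by (metis image_iff)
  show ?thesis using f[OF d(1)] d by auto
qed

lemma good_inv: assumes w: "w \<in> weyl_group cor R" shows "good R (inv w)"
  unfolding good_def
proof (intro ballI allI)
  fix c k assume c: "c \<in> cor ` R"
  obtain d where d: "d \<in> cor ` R" "\<forall>x. w x \<bullet> d = x \<bullet> c" using weyl_transpose_surj[OF closedR w c] by blast
  have wp: "surj w" using weyl_props[OF closedR w] by auto
  have "\<forall>x. inv w x \<bullet> c - of_int k = x \<bullet> d - of_int k"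
  proof
    fix x have "w (inv w x) = x" using wp by (rule surj_f_inv_f)
    then show "inv w x \<bullet> c - of_int k = x \<bullet> d - of_int k" using d(2)[rule_format, of "inv w x"] by simp
  qed
  then show "\<exists>c'\<in>cor ` R. \<exists>k'::int. \<forall>x. inv w x \<bullet> c - of_int k = x \<bullet> c' - of_int k'"
    using d(1) by blast
qed

end

lemma between_bound: fixes u v k :: real
  assumes "(u - k) * (v - k) < 0" shows "\<bar>k\<bar> \<le> \<bar>u\<bar> + \<bar>v\<bar>"
proof (rule ccontr)
  assume "\<not> \<bar>k\<bar> \<le> \<bar>u\<bar> + \<bar>v\<bar>"
  then have "(k > u \<and> k > v) \<or> (k < u \<and> k < v)" by linarith
  then have "(u - k) * (v - k) > 0" by (auto intro: mult_pos_pos mult_neg_neg)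
  then show False using assms by simp
qed

lemma sign_unit: fixes u v :: real and k :: int
  assumes "0 < u" "u < 1" "0 < v" "v < 1" shows "(u - of_int k) * (v - of_int k) > 0"
proof (cases "k \<le> 0")
  case True
  then have "u - of_int k > 0" "v - of_int k > 0" using assms by linarith+
  then show ?thesis by simp
next
  case False
  then have "k \<ge> 1" by simp
  then have "u - of_int k < 0" "v - of_int k < 0" using assms by linarith+
  then show ?thesis by (simp add: mult_neg_neg)
qed

lemma sign_unit_neg: fixes u v :: real and k :: int
  assumes "-1 < u" "u < 0" "-1 < v" "v < 0" shows "(u - of_int k) * (v - of_int k) > 0"
proof -
  have "((- u) - of_int (- k)) * ((- v) - of_int (- k)) > 0" using assms by (intro sign_unit) auto
  then show ?thesis by (simp add: algebra_simps)
qed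

lemma sign_transfer: fixes p1 p2 q1 q2 :: real
  assumes "p1 * p2 < 0" "p1 * q1 > 0" "p2 * q2 > 0" shows "q1 * q2 < 0"
proof -
  have "(p1 * q1) * (p2 * q2) > 0" using assms by simp
  then have "(p1 * p2) * (q1 * q2) > 0" by (simp add: algebra_simps)
  show ?thesis
  proof (rule ccontr)
    assume "\<not> q1 * q2 < 0"
    then have "q1 * q2 \<ge> 0" by simp
    then have "(p1 * p2) * (q1 * q2) \<le> 0" using assms(1) mult_nonpos_nonneg[of "p1 * p2" "q1 * q2"] by simp
    then show False using \<open>(p1 * p2) * (q1 * q2) > 0\<close> by simp
  qed
qed

context rd begin

definition T :: "'v set \<Rightarrow> 'v \<Rightarrow> 'v \<Rightarrow> ('v \<times> int) set" where
  "T Q p q = {(c, k). c \<in> cor ` Q \<and> (p \<bullet> c - of_int k) * (q \<bullet> c - of_int k) < 0}"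

lemma fin_T: assumes Q: "closedQ Q" shows "finite (T Q p q)"
proof -
  define N where "N = \<lceil>\<Sum>c\<in>cor ` R. \<bar>p \<bullet> c\<bar> + \<bar>q \<bullet> c\<bar>\<rceil>"
  have sub: "T Q p q \<subseteq> cor ` R \<times> {-N..N}"
  proof
    fix x assume "x \<in> T Q p q"
    then obtain c k where x: "x = (c, k)" "c \<in> cor ` Q" "(p \<bullet> c - of_int k) * (q \<bullet> c - of_int k) < 0"
      by (auto simp: T_def)
    have cR: "c \<in> cor ` R" using x(2) Q by (auto simp: closedQ_def)
    have "\<bar>of_int k\<bar> \<le> \<bar>p \<bullet> c\<bar> + \<bar>q \<bullet> c\<bar>" using between_bound[OF x(3)] .
    also have "\<dots> \<le> (\<Sum>c\<in>cor ` R. \<bar>p \<bullet> c\<bar> + \<bar>q \<bullet> c\<bar>)"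
      using cR finC by (intro member_le_sum) auto
    also have "\<dots> \<le> of_int N" unfolding N_def by (rule le_of_int_ceiling)
    finally have "\<bar>k\<bar> \<le> N" by linarith
    then show "x \<in> cor ` R \<times> {-N..N}" using x(1) cR by auto
  qed
  show ?thesis using finite_subset[OF sub] finC by blast
qed

lemma alcove_sign:
  assumes Q: "closedQ Q" and reg: "\<forall>\<beta>\<in>Q. \<beta> \<bullet> \<xi> \<noteq> 0"
    and x: "x \<in> base_alcove cor (pos_roots Q \<xi>)" and y: "y \<in> base_alcove cor (pos_roots Q \<xi>)"
    and c: "c \<in> cor ` Q"
  shows "(x \<bullet> c - of_int k) * (y \<bullet> c - of_int k) > 0"
proof -
  obtain \<gamma> where g: "\<gamma> \<in> Q" "c = cor \<gamma>" using c by auto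
  have gR: "\<gamma> \<in> R" using Q g by (auto simp: closedQ_def)
  show ?thesis
  proof (cases "\<gamma> \<bullet> \<xi> > 0")
    case True
    then have "\<gamma> \<in> pos_roots Q \<xi>" using g by (simp add: pos_roots_def)
    then show ?thesis using x y g by (intro sign_unit) (auto simp: base_alcove_def)
  next
    case False
    then have "- \<gamma> \<in> pos_roots Q \<xi>" using g reg Q
      by (auto simp: pos_roots_def closedQ_def)
    moreover have "c = - cor (- \<gamma>)" using cor_neg[OF gR] g by simp
    ultimately show ?thesis using x y by (intro sign_unit_neg) (auto simp: base_alcove_def)
  qed
qed

lemma generic_alcove:
  assumes Q: "closedQ Q" and reg: "\<forall>\<beta>\<in>Q. \<beta> \<bullet> \<xi> \<noteq> 0"
    and x: "x \<in> base_alcove cor (pos_roots Q \<xi>)" and c: "c \<in> cor ` Q"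
  shows "x \<bullet> c - of_int k \<noteq> 0"
  using alcove_sign[OF Q reg x x c, of k] by auto

end

context rd begin

lemma length_T:
  assumes Q: "closedQ Q" and reg: "\<forall>\<beta>\<in>Q. \<beta> \<bullet> \<xi> \<noteq> 0"
    and a: "a \<in> base_alcove cor (pos_roots Q \<xi>)" and g: "good Q g"
  shows "card (T Q a (g a)) = 2 * alcove_length cor (pos_roots Q \<xi>) g"
proof -
  define P where "P = pos_roots Q \<xi>"
  define A where "A = base_alcove cor P"
  have aA: "a \<in> A" using a by (simp add: A_def P_def)
  have PQ: "P \<subseteq> Q" by (auto simp: P_def pos_roots_def)
  have QR: "Q \<subseteq> R" using Q by (simp add: closedQ_def)
  have sepiff: "separates cor A (g ` A) \<beta> k \<longleftrightarrow> (a \<bullet> cor \<beta> - of_int k) * (g a \<bullet> cor \<beta> - of_int k) < 0"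
    if b: "\<beta> \<in> P" for \<beta> k
  proof
    assume "(a \<bullet> cor \<beta> - of_int k) * (g a \<bullet> cor \<beta> - of_int k) < 0"
    then show "separates cor A (g ` A) \<beta> k" using aA by (auto simp: separates_def)
  next
    assume "separates cor A (g ` A) \<beta> k"
    then obtain x y where xy: "x \<in> A" "y \<in> A" "(x \<bullet> cor \<beta> - of_int k) * (g y \<bullet> cor \<beta> - of_int k) < 0"
      by (auto simp: separates_def)
    have c: "cor \<beta> \<in> cor ` Q" using b PQ by auto
    obtain c' k' where c': "c' \<in> cor ` Q" "\<forall>z. g z \<bullet> cor \<beta> - of_int k = z \<bullet> c' - of_int k'"
      using g c unfolding good_def by blast
    have s1: "(x \<bullet> cor \<beta> - of_int k) * (a \<bullet> cor \<beta> - of_int k) > 0"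
      using alcove_sign[OF Q reg _ _ c] xy(1) aA by (simp add: A_def P_def)
    have s2: "(y \<bullet> c' - of_int k') * (a \<bullet> c' - of_int k') > 0"
      using alcove_sign[OF Q reg _ _ c'(1)] xy(2) aA by (simp add: A_def P_def)
    have "(x \<bullet> cor \<beta> - of_int k) * (y \<bullet> c' - of_int k') < 0" using xy(3) c'(2) by simp
    then have "(a \<bullet> cor \<beta> - of_int k) * (a \<bullet> c' - of_int k') < 0" using sign_transfer s1 s2 by blast
    then show "(a \<bullet> cor \<beta> - of_int k) * (g a \<bullet> cor \<beta> - of_int k) < 0" using c'(2) by simp
  qed
  define Tb where "Tb = {(\<beta>, k). \<beta> \<in> P \<and> (a \<bullet> cor \<beta> - of_int k) * (g a \<bullet> cor \<beta> - of_int k) < 0}"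
  have len: "alcove_length cor P g = card Tb"
  proof -
    have "{(\<beta>, k). \<beta> \<in> P \<and> separates cor (base_alcove cor P) (g ` base_alcove cor P) \<beta> k} = Tb"
      using sepiff by (auto simp: Tb_def A_def)
    then show ?thesis by (simp add: alcove_length_def)
  qed
  define Tp where "Tp = {x \<in> T Q a (g a). fst x \<in> cor ` P}"
  define Tm where "Tm = {x \<in> T Q a (g a). fst x \<notin> cor ` P}"
  have fin: "finite (T Q a (g a))" using fin_T[OF Q] .
  have split: "T Q a (g a) = Tp \<union> Tm" "Tp \<inter> Tm = {}" by (auto simp: Tp_def Tm_def)
  have finp: "finite Tp" "finite Tm" using fin by (auto simp: Tp_def Tm_def)
  have injc: "inj_on (\<lambda>(\<beta>, k). (cor \<beta>, k)) Tb"
  proof (rule inj_onI)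
    fix x y assume "x \<in> Tb" "y \<in> Tb" "(\<lambda>(\<beta>, k). (cor \<beta>, k)) x = (\<lambda>(\<beta>, k). (cor \<beta>, k)) y"
    then show "x = y" using injcor PQ QR by (auto simp: Tb_def inj_on_def)
  qed
  have imgp: "(\<lambda>(\<beta>, k). (cor \<beta>, k)) ` Tb = Tp"
  proof
    show "(\<lambda>(\<beta>, k). (cor \<beta>, k)) ` Tb \<subseteq> Tp" using PQ by (auto simp: Tb_def Tp_def T_def)
    show "Tp \<subseteq> (\<lambda>(\<beta>, k). (cor \<beta>, k)) ` Tb"
    proof
      fix x assume "x \<in> Tp"
      then obtain \<beta> k where "x = (cor \<beta>, k)" "\<beta> \<in> P" "(a \<bullet> cor \<beta> - of_int k) * (g a \<bullet> cor \<beta> - of_int k) < 0"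
        by (auto simp: Tp_def T_def)
      then show "x \<in> (\<lambda>(\<beta>, k). (cor \<beta>, k)) ` Tb" by (auto simp: Tb_def image_iff)
    qed
  qed
  have cardp: "card Tp = card Tb" using card_image[OF injc] imgp by simp
  define ng where "ng = (\<lambda>(c::'v, k::int). (- c, - k))"
  have injn: "inj_on ng Tp" by (auto simp: ng_def inj_on_def)
  have imgm: "ng ` Tp = Tm"
  proof
    show "ng ` Tp \<subseteq> Tm"
    proof
      fix y assume "y \<in> ng ` Tp"
      then obtain c k where ck: "(c, k) \<in> Tp" "y = (- c, - k)" by (auto simp: ng_def)
      then obtain \<beta> where b: "\<beta> \<in> P" "c = cor \<beta>" by (auto simp: Tp_def)
      have cQ: "c \<in> cor ` Q" using b PQ by auto
      have "- c \<in> cor ` Q" using neg_Q[OF Q cQ] .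
      moreover have "(a \<bullet> (- c) - of_int (- k)) * (g a \<bullet> (- c) - of_int (- k)) < 0"
        using ck by (auto simp: Tp_def T_def algebra_simps)
      moreover have "- c \<notin> cor ` P"
      proof
        assume "- c \<in> cor ` P"
        then obtain \<gamma> where g': "\<gamma> \<in> P" "- c = cor \<gamma>" by auto
        have bR: "\<beta> \<in> R" "\<gamma> \<in> R" using b g' PQ QR by auto
        have "cor \<beta> = - cor \<gamma>" using b g' by (metis minus_minus)
        then have "cor \<beta> = cor (- \<gamma>)" using cor_neg[OF bR(2)] by simp
        then have "\<beta> = - \<gamma>" using injcor bR neg_root by (auto simp: inj_on_def)
        then show False using b g' by (auto simp: P_def pos_roots_def)
      qed
      ultimately show "y \<in> Tm" using ck by (auto simp: Tm_def T_def)
    qed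
    show "Tm \<subseteq> ng ` Tp"
    proof
      fix y assume y: "y \<in> Tm"
      then obtain c k where ck: "y = (c, k)" "c \<in> cor ` Q" "c \<notin> cor ` P"
        "(a \<bullet> c - of_int k) * (g a \<bullet> c - of_int k) < 0"
        by (auto simp: Tm_def T_def)
      obtain \<gamma> where g': "\<gamma> \<in> Q" "c = cor \<gamma>" using ck by auto
      have gR: "\<gamma> \<in> R" using g' QR by auto
      have "\<not> \<gamma> \<bullet> \<xi> > 0" using ck g' by (auto simp: P_def pos_roots_def)
      then have "- \<gamma> \<in> P" using reg g' Q by (auto simp: P_def pos_roots_def closedQ_def)
      moreover have "- c = cor (- \<gamma>)" using cor_neg[OF gR] g' by simp
      ultimately have ncP: "- c \<in> cor ` P" by auto
      then have ncQ: "- c \<in> cor ` Q" using PQ by auto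
      have e1: "a \<bullet> (- c) - of_int (- k) = - (a \<bullet> c - of_int k)" by simp
      have e2: "g a \<bullet> (- c) - of_int (- k) = - (g a \<bullet> c - of_int k)" by simp
      have "(a \<bullet> (- c) - of_int (- k)) * (g a \<bullet> (- c) - of_int (- k)) < 0"
        unfolding e1 e2 using ck(4) by (simp only: minus_mult_minus)
      then have "(- c, - k) \<in> Tp" using ncP ncQ by (simp add: Tp_def T_def)
      moreover have "y = ng (- c, - k)" using ck by (simp add: ng_def)
      ultimately show "y \<in> ng ` Tp" by blast
    qed
  qed
  have cardm: "card Tm = card Tp" using card_image[OF injn] imgm by simp
  have "card (T Q a (g a)) = card Tp + card Tm" using split finp by (simp add: card_Un_disjoint)
  then show ?thesis using cardm cardp len by (simp add: P_def)
qed

end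

context rd begin

lemma aref_h: assumes a: "\<alpha> \<in> R"
  shows "affine_refl cor \<alpha> m x \<bullet> cor \<alpha> + of_int m = - (x \<bullet> cor \<alpha> + of_int m)"
  using two[OF a] by (simp add: affine_refl_eq[OF a] inner_diff_left algebra_simps)

lemma aref_aref: assumes a: "\<alpha> \<in> R"
  shows "affine_refl cor \<alpha> m (affine_refl cor \<alpha> m x) = x"
proof -
  have "affine_refl cor \<alpha> m (affine_refl cor \<alpha> m x)
      = affine_refl cor \<alpha> m x - (affine_refl cor \<alpha> m x \<bullet> cor \<alpha> + of_int m) *\<^sub>R \<alpha>"
    by (rule affine_refl_eq[OF a])
  also have "\<dots> = affine_refl cor \<alpha> m x + (x \<bullet> cor \<alpha> + of_int m) *\<^sub>R \<alpha>"
    by (simp only: aref_h[OF a] scaleR_minus_left diff_minus_eq_add)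
  also have "\<dots> = x" by (simp add: affine_refl_eq[OF a])
  finally show ?thesis .
qed

lemma refl_count_pos:
  fixes hf :: "'v \<Rightarrow> real" and s :: real
  assumes Q: "closedQ Q" and a: "\<alpha> \<in> Q"
    and s: "s = 1 \<or> s = -1"
    and hf: "\<And>x. hf x = s * (x \<bullet> cor \<alpha> + of_int m)"
    and gen: "\<And>c k. c \<in> cor ` Q \<Longrightarrow> p \<bullet> c - of_int k \<noteq> 0"
    and hp: "hf p > 0" and hq: "hf q > 0"
  shows "card (T Q p q) + 2 \<le> card (T Q p (affine_refl cor \<alpha> m q))"
proof -
  have aR: "\<alpha> \<in> R" using Q a by (auto simp: closedQ_def)
  define r where "r = affine_refl cor \<alpha> m"
  define I where "I = {(c, k::int). c \<in> cor ` Q}"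
  define ev where "ev = (\<lambda>(c::'v, k::int) (x::'v). x \<bullet> c - (of_int k :: real))"
  define \<sigma> where "\<sigma> = (\<lambda>(c, k::int). (corefl cor \<alpha> c, k + m * \<lfloor>\<alpha> \<bullet> c\<rfloor>))"
  define lam where "lam = (\<lambda>(c::'v, k::int). s * (\<alpha> \<bullet> c))"
  have intc: "\<alpha> \<bullet> c = of_int \<lfloor>\<alpha> \<bullet> c\<rfloor>" if "c \<in> cor ` Q" for c
  proof -
    have "c \<in> cor ` R" using that Q by (auto simp: closedQ_def)
    then obtain n where "\<alpha> \<bullet> c = of_int n" using int_pair[OF aR] by blast
    then show ?thesis by simp
  qed
  have acor: "\<alpha> \<bullet> corefl cor \<alpha> c = - (\<alpha> \<bullet> c)" for c
    using two[OF aR] by (simp add: corefl_def inner_diff_right)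
  have hr: "hf (r x) = - hf x" for x unfolding r_def by (simp only: hf aref_h[OF aR] mult_minus_right)
  have rr: "r (r q) = q" using aref_aref[OF aR] by (simp add: r_def)
  have s2: "s * s = 1" using s by auto
  have rx: "r x = x - (s * hf x) *\<^sub>R \<alpha>" for x
    using affine_refl_eq[OF aR] hf s2 by (simp add: r_def mult.assoc[symmetric])
  define h0 where "h0 = (if s = 1 then (cor \<alpha>, - m) else (- cor \<alpha>, m))"
  define nh0 where "nh0 = (if s = 1 then (- cor \<alpha>, m) else (cor \<alpha>, - m))"
  have caQ: "cor \<alpha> \<in> cor ` Q" "- cor \<alpha> \<in> cor ` Q" using a neg_Q[OF Q, of "cor \<alpha>"] by auto
  have main: "card {i\<in>I. ev i p * ev i q < 0} + 2 \<le> card {i\<in>I. ev i p * ev i (r q) < 0}"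
  proof (rule abstract_count[where \<sigma>=\<sigma> and lam=lam and h=hf and r=r and hz=h0 and nhz=nh0])
    fix i assume "i \<in> I"
    then obtain c k where i: "i = (c, k)" "c \<in> cor ` Q" by (auto simp: I_def)
    show "\<sigma> i \<in> I" using i corefl_Q[OF Q a i(2)] by (simp add: \<sigma>_def I_def)
    have fl: "\<lfloor>\<alpha> \<bullet> corefl cor \<alpha> c\<rfloor> = - \<lfloor>\<alpha> \<bullet> c\<rfloor>"
    proof -
      have "\<alpha> \<bullet> corefl cor \<alpha> c = of_int (- \<lfloor>\<alpha> \<bullet> c\<rfloor>)" using acor intc[OF i(2)] by simp
      then show ?thesis by (simp only: floor_of_int)
    qed
    show "\<sigma> (\<sigma> i) = i" using i fl corefl_corefl[OF aR] by (simp add: \<sigma>_def algebra_simps)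
    fix x
    have "r x \<bullet> c = x \<bullet> corefl cor \<alpha> c + of_int m * (\<alpha> \<bullet> corefl cor \<alpha> c)"
      by (simp add: r_def affine_refl_def refl_transpose inner_add_left)
    also have "\<dots> = x \<bullet> corefl cor \<alpha> c - of_int m * of_int \<lfloor>\<alpha> \<bullet> c\<rfloor>"
      using acor intc[OF i(2)] by simp
    finally have e: "r x \<bullet> c = x \<bullet> corefl cor \<alpha> c - of_int m * of_int \<lfloor>\<alpha> \<bullet> c\<rfloor>" .
    show "ev (\<sigma> i) x = ev i (r x)" using i e by (simp add: ev_def \<sigma>_def algebra_simps)
    show "ev i (r x) = ev i x - lam i * hf x"
      using i by (simp add: ev_def lam_def rx inner_diff_left algebra_simps)
  next
    show "r (r q) = q" by (rule rr)
  next
    fix x show "hf (r x) = - hf x" by (rule hr)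
  next
    show "h0 \<in> I" using caQ by (simp add: h0_def I_def)
    show "nh0 \<in> I" using caQ by (simp add: nh0_def I_def)
  next
    fix x show "ev h0 x = hf x" using s hf by (auto simp: h0_def ev_def)
    show "ev nh0 x = - hf x" using s hf by (auto simp: nh0_def ev_def)
  next
    fix i assume "i \<in> I"
    then show "ev i p \<noteq> 0" using gen by (auto simp: I_def ev_def)
  next
    show "hf p > 0" "hf q > 0" using hp hq by auto
  next
    have "{i\<in>I. ev i p * ev i (r q) < 0} = T Q p (r q)" by (auto simp: I_def ev_def T_def)
    then show "finite {i\<in>I. ev i p * ev i (r q) < 0}" using fin_T[OF Q] by simp
  qed
  moreover have "{i\<in>I. ev i p * ev i (r q) < 0} = T Q p (r q)" by (auto simp: I_def ev_def T_def)
  moreover have "{i\<in>I. ev i p * ev i q < 0} = T Q p q" by (auto simp: I_def ev_def T_def)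
  ultimately show ?thesis by (simp add: r_def)
qed

lemma refl_count:
  assumes Q: "closedQ Q" and a: "\<alpha> \<in> Q"
    and gen: "\<And>c k. c \<in> cor ` Q \<Longrightarrow> p \<bullet> c - of_int k \<noteq> 0"
    and hpq: "(p \<bullet> cor \<alpha> + of_int m) * (q \<bullet> cor \<alpha> + of_int m) > 0"
  shows "card (T Q p q) + 2 \<le> card (T Q p (affine_refl cor \<alpha> m q))"
proof (cases "p \<bullet> cor \<alpha> + of_int m > 0")
  case True
  then have "q \<bullet> cor \<alpha> + of_int m > 0" using hpq by (simp add: zero_less_mult_iff)
  then show ?thesis using True
    by (intro refl_count_pos[OF Q a _ _ gen, of 1 "\<lambda>x. 1 * (x \<bullet> cor \<alpha> + of_int m)"]) auto
next
  case False
  then have "p \<bullet> cor \<alpha> + of_int m < 0" "q \<bullet> cor \<alpha> + of_int m < 0" using hpq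
    by (auto simp: zero_less_mult_iff)
  then show ?thesis
    by (intro refl_count_pos[OF Q a _ _ gen, of "-1" "\<lambda>x. -1 * (x \<bullet> cor \<alpha> + of_int m)"]) auto
qed

lemma refl_count_neg:
  assumes Q: "closedQ Q" and a: "\<alpha> \<in> Q"
    and gen: "\<And>c k. c \<in> cor ` Q \<Longrightarrow> p \<bullet> c - of_int k \<noteq> 0"
    and hpq: "(p \<bullet> cor \<alpha> + of_int m) * (q \<bullet> cor \<alpha> + of_int m) < 0"
  shows "card (T Q p (affine_refl cor \<alpha> m q)) + 2 \<le> card (T Q p q)"
proof -
  have aR: "\<alpha> \<in> R" using Q a by (auto simp: closedQ_def)
  have "(p \<bullet> cor \<alpha> + of_int m) * (affine_refl cor \<alpha> m q \<bullet> cor \<alpha> + of_int m) > 0"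
    using hpq by (simp only: aref_h[OF aR] mult_minus_right neg_0_less_iff_less)
  from refl_count[OF Q a gen this] show ?thesis using aref_aref[OF aR] by simp
qed

end

context rd begin

lemma weyl_transpose_bij:
  assumes w: "w \<in> weyl_group cor R"
  shows "\<exists>f. (\<forall>d\<in>cor ` R. f d \<in> cor ` R \<and> (\<forall>x. w x \<bullet> d = x \<bullet> f d)) \<and> inj_on f (cor ` R) \<and> f ` cor ` R = cor ` R"
proof -
  have wp: "linear w" "inj w" "surj w" "\<forall>c\<in>cor ` R. \<exists>c'\<in>cor ` R. \<forall>x. w x \<bullet> c = x \<bullet> c'"
    using weyl_props[OF closedR w] by auto
  define f where "f d = (SOME c'. c' \<in> cor ` R \<and> (\<forall>x. w x \<bullet> d = x \<bullet> c'))" for d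
  have f: "f d \<in> cor ` R \<and> (\<forall>x. w x \<bullet> d = x \<bullet> f d)" if "d \<in> cor ` R" for d
  proof -
    have "\<exists>c'. c' \<in> cor ` R \<and> (\<forall>x. w x \<bullet> d = x \<bullet> c')" using wp(4) that by blast
    then show ?thesis unfolding f_def by (rule someI_ex)
  qed
  have inj: "inj_on f (cor ` R)"
  proof
    fix d1 d2 assume d: "d1 \<in> cor ` R" "d2 \<in> cor ` R" "f d1 = f d2"
    have "\<forall>x. w x \<bullet> d1 = w x \<bullet> d2" using f[OF d(1)] f[OF d(2)] d(3) by simp
    have "y \<bullet> d1 = y \<bullet> d2" for y
    proof -
      obtain x where "y = w x" using wp(3) by blast
      then show ?thesis using \<open>\<forall>x. w x \<bullet> d1 = w x \<bullet> d2\<close> by simp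
    qed
    then have "(d1 - d2) \<bullet> (d1 - d2) = 0" by (simp add: inner_diff_right inner_diff_left)
    then show "d1 = d2" by simp
  qed
  have sub: "f ` cor ` R \<subseteq> cor ` R" using f by blast
  have "card (f ` cor ` R) = card (cor ` R)" using inj by (rule card_image)
  then have "f ` cor ` R = cor ` R"
    using sub finC by (intro card_subset_eq) auto
  then show ?thesis using f inj by blast
qed

lemma card_transport:
  assumes w: "w \<in> weyl_group cor R"
  shows "card (T R (w a) q) = card (T R a (inv w q))"
proof -
  obtain f where f: "\<forall>d\<in>cor ` R. f d \<in> cor ` R \<and> (\<forall>x. w x \<bullet> d = x \<bullet> f d)"
    "inj_on f (cor ` R)" "f ` cor ` R = cor ` R"
    using weyl_transpose_bij[OF w] by blast
  have sw: "surj w" using weyl_props[OF closedR w] by auto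
  have wi: "w (inv w q) = q" using sw by (rule surj_f_inv_f)
  define g where "g = (\<lambda>(d::'v, k::int). (f d, k))"
  have inj: "inj_on g (T R (w a) q)"
    using f(2) by (auto simp: g_def inj_on_def T_def)
  have img: "g ` T R (w a) q = T R a (inv w q)"
  proof
    show "g ` T R (w a) q \<subseteq> T R a (inv w q)"
    proof
      fix y assume "y \<in> g ` T R (w a) q"
      then obtain d k where dk: "y = (f d, k)" "d \<in> cor ` R" "(w a \<bullet> d - of_int k) * (q \<bullet> d - of_int k) < 0"
        by (auto simp: g_def T_def)
      have "w a \<bullet> d = a \<bullet> f d" "q \<bullet> d = inv w q \<bullet> f d" using f(1) dk(2) wi by metis+
      then show "y \<in> T R a (inv w q)" using dk f(1) by (auto simp: T_def)
    qed
    show "T R a (inv w q) \<subseteq> g ` T R (w a) q"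
    proof
      fix y assume "y \<in> T R a (inv w q)"
      then obtain c k where ck: "y = (c, k)" "c \<in> cor ` R" "(a \<bullet> c - of_int k) * (inv w q \<bullet> c - of_int k) < 0"
        by (auto simp: T_def)
      obtain d where d: "d \<in> cor ` R" "f d = c" using f(3) ck(2) by (metis image_iff)
      have "w a \<bullet> d = a \<bullet> c" "q \<bullet> d = inv w q \<bullet> c" using f(1) d wi by metis+
      then have "(d, k) \<in> T R (w a) q" using ck d by (auto simp: T_def)
      moreover have "y = g (d, k)" using ck d by (simp add: g_def)
      ultimately show "y \<in> g ` T R (w a) q" by blast
    qed
  qed
  show ?thesis using card_image[OF inj] img by simp
qed

lemma alcove_bound:
  assumes reg: "\<forall>\<beta>\<in>R. \<beta> \<bullet> \<xi> \<noteq> 0" and x: "x \<in> base_alcove cor (pos_roots R \<xi>)"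
    and c: "c \<in> cor ` R"
  shows "-1 < x \<bullet> c \<and> x \<bullet> c < 1"
proof -
  obtain \<gamma> where g: "\<gamma> \<in> R" "c = cor \<gamma>" using c by auto
  show ?thesis
  proof (cases "\<gamma> \<bullet> \<xi> > 0")
    case True
    then have "\<gamma> \<in> pos_roots R \<xi>" using g by (simp add: pos_roots_def)
    then show ?thesis using x g by (auto simp: base_alcove_def)
  next
    case False
    then have "- \<gamma> \<in> pos_roots R \<xi>" using g reg neg_root
      by (auto simp: pos_roots_def)
    moreover have "c = - cor (- \<gamma>)" using cor_neg[OF g(1)] g by simp
    ultimately show ?thesis using x by (auto simp: base_alcove_def)
  qed
qed

end

context rd begin

definition Bv :: "'v \<Rightarrow> 'v \<Rightarrow> real" where
  "Bv y y' = (\<Sum>\<gamma>\<in>R. (y \<bullet> \<gamma>) * (y' \<bullet> \<gamma>))"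

lemma Bv_inv: assumes b: "\<beta> \<in> R"
  shows "Bv (corefl cor \<beta> y) (corefl cor \<beta> y') = Bv y y'"
proof -
  have inj: "inj_on (refl cor \<beta>) R" by (metis inj_onI refl_refl[OF b])
  have "Bv (corefl cor \<beta> y) (corefl cor \<beta> y') = (\<Sum>\<gamma>\<in>R. (y \<bullet> refl cor \<beta> \<gamma>) * (y' \<bullet> refl cor \<beta> \<gamma>))"
    unfolding Bv_def
  proof (intro sum.cong refl)
    fix \<gamma>
    have e: "corefl cor \<beta> z \<bullet> \<gamma> = z \<bullet> refl cor \<beta> \<gamma>" for z
      using refl_transpose[of \<beta> \<gamma> z] by (simp add: inner_commute)
    show "corefl cor \<beta> y \<bullet> \<gamma> * (corefl cor \<beta> y' \<bullet> \<gamma>) = y \<bullet> refl cor \<beta> \<gamma> * (y' \<bullet> refl cor \<beta> \<gamma>)"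
      by (simp only: e)
  qed
  also have "\<dots> = (\<Sum>\<gamma>\<in>refl cor \<beta> ` R. (y \<bullet> \<gamma>) * (y' \<bullet> \<gamma>))"
    using sum.reindex[OF inj, of "\<lambda>\<gamma>. (y \<bullet> \<gamma>) * (y' \<bullet> \<gamma>)"] by simp
  also have "\<dots> = Bv y y'" using reflR[OF b] by (simp add: Bv_def)
  finally show ?thesis .
qed

lemma Bv_key: assumes b: "\<beta> \<in> R"
  shows "(\<beta> \<bullet> y) * Bv (cor \<beta>) (cor \<beta>) = 2 * Bv y (cor \<beta>)"
proof -
  have c: "corefl cor \<beta> (cor \<beta>) = - cor \<beta>" using two[OF b] by (simp add: corefl_def scaleR_2)
  have "Bv y (cor \<beta>) = Bv (corefl cor \<beta> y) (- cor \<beta>)" using Bv_inv[OF b, of y "cor \<beta>"] c by simp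
  also have "\<dots> = (\<Sum>\<gamma>\<in>R. (\<beta> \<bullet> y) * ((cor \<beta> \<bullet> \<gamma>) * (cor \<beta> \<bullet> \<gamma>)) - (y \<bullet> \<gamma>) * (cor \<beta> \<bullet> \<gamma>))"
    unfolding Bv_def corefl_def by (intro sum.cong refl) (simp add: inner_diff_left algebra_simps)
  also have "\<dots> = (\<beta> \<bullet> y) * Bv (cor \<beta>) (cor \<beta>) - Bv y (cor \<beta>)"
    unfolding Bv_def by (simp add: sum_subtractf sum_distrib_left)
  finally show ?thesis by simp
qed

lemma Bv_pos: assumes b: "\<beta> \<in> R" shows "Bv (cor \<beta>) (cor \<beta>) \<ge> 4"
proof -
  have "(cor \<beta> \<bullet> \<beta>) * (cor \<beta> \<bullet> \<beta>) \<le> Bv (cor \<beta>) (cor \<beta>)"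
    unfolding Bv_def using b finR by (intro member_le_sum) auto
  moreover have "cor \<beta> \<bullet> \<beta> = 2" using two[OF b] by (simp add: inner_commute)
  ultimately show ?thesis by simp
qed

lemma alcove_nonempty:
  assumes reg: "\<forall>\<beta>\<in>R. \<beta> \<bullet> \<xi> \<noteq> 0"
  shows "\<exists>a. a \<in> base_alcove cor (pos_roots R \<xi>)"
proof -
  define P where "P = pos_roots R \<xi>"
  define x0 where "x0 = (\<Sum>\<gamma>\<in>R. (\<xi> \<bullet> \<gamma>) *\<^sub>R \<gamma>)"
  have x0c: "x0 \<bullet> cor \<beta> = Bv \<xi> (cor \<beta>)" for \<beta>
    unfolding x0_def Bv_def inner_sum_left inner_scaleR_left
    by (intro sum.cong refl) (simp add: inner_commute)
  have pos: "x0 \<bullet> cor \<beta> > 0" if b: "\<beta> \<in> P" for \<beta>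
  proof -
    have bR: "\<beta> \<in> R" "\<beta> \<bullet> \<xi> > 0" using b by (auto simp: P_def pos_roots_def)
    have "2 * (x0 \<bullet> cor \<beta>) = (\<beta> \<bullet> \<xi>) * Bv (cor \<beta>) (cor \<beta>)" using Bv_key[OF bR(1), of \<xi>] x0c by simp
    moreover have "(\<beta> \<bullet> \<xi>) * Bv (cor \<beta>) (cor \<beta>) > 0" using bR Bv_pos[OF bR(1)] by simp
    ultimately show ?thesis by simp
  qed
  have finP: "finite P" using finR by (simp add: P_def pos_roots_def)
  define D where "D = 1 + (\<Sum>\<beta>\<in>P. x0 \<bullet> cor \<beta>)"
  have le: "x0 \<bullet> cor \<beta> \<le> (\<Sum>\<beta>\<in>P. x0 \<bullet> cor \<beta>)" if "\<beta> \<in> P" for \<beta>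
    using that finP pos by (intro member_le_sum) (auto intro: less_imp_le)
  have "(1 / D) *\<^sub>R x0 \<in> base_alcove cor P"
    unfolding base_alcove_def
  proof (intro CollectI ballI conjI)
    fix \<beta> assume b: "\<beta> \<in> P"
    have p: "x0 \<bullet> cor \<beta> > 0" using pos[OF b] .
    have Dg: "D > x0 \<bullet> cor \<beta>" using le[OF b] by (simp add: D_def)
    have e: "(1 / D) *\<^sub>R x0 \<bullet> cor \<beta> = (x0 \<bullet> cor \<beta>) / D" by simp
    show "0 < (1 / D) *\<^sub>R x0 \<bullet> cor \<beta>" using p Dg by (simp only: e) simp
    show "(1 / D) *\<^sub>R x0 \<bullet> cor \<beta> < 1" using p Dg by (simp only: e) simp
  qed
  then show ?thesis by (auto simp: P_def)
qed

definition Bc :: "'v \<Rightarrow> 'v \<Rightarrow> real" where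
  "Bc x y = (\<Sum>c\<in>cor ` R. (x \<bullet> c) * (y \<bullet> c))"

lemma Bc_inv: assumes b: "\<beta> \<in> R"
  shows "Bc (refl cor \<beta> x) (refl cor \<beta> y) = Bc x y"
proof -
  have inj: "inj_on (corefl cor \<beta>) (cor ` R)" by (metis inj_onI corefl_corefl[OF b])
  have "Bc (refl cor \<beta> x) (refl cor \<beta> y) = (\<Sum>c\<in>cor ` R. (x \<bullet> corefl cor \<beta> c) * (y \<bullet> corefl cor \<beta> c))"
    unfolding Bc_def by (simp add: refl_transpose)
  also have "\<dots> = (\<Sum>c\<in>corefl cor \<beta> ` cor ` R. (x \<bullet> c) * (y \<bullet> c))"
    using sum.reindex[OF inj, of "\<lambda>c. (x \<bullet> c) * (y \<bullet> c)"] by simp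
  also have "\<dots> = Bc x y" using coreflC[OF b] by (simp add: Bc_def)
  finally show ?thesis .
qed

lemma Bc_key: assumes b: "\<beta> \<in> R"
  shows "(x \<bullet> cor \<beta>) * Bc \<beta> \<beta> = 2 * Bc x \<beta>"
proof -
  have c: "refl cor \<beta> \<beta> = - \<beta>" using two[OF b] by (simp add: refl_def scaleR_2)
  have "Bc x \<beta> = Bc (refl cor \<beta> x) (- \<beta>)" using Bc_inv[OF b, of x \<beta>] c by simp
  also have "\<dots> = (\<Sum>c\<in>cor ` R. (x \<bullet> cor \<beta>) * ((\<beta> \<bullet> c) * (\<beta> \<bullet> c)) - (x \<bullet> c) * (\<beta> \<bullet> c))"
    unfolding Bc_def refl_def by (intro sum.cong refl) (simp add: inner_diff_left algebra_simps)
  also have "\<dots> = (x \<bullet> cor \<beta>) * Bc \<beta> \<beta> - Bc x \<beta>"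
    unfolding Bc_def by (simp add: sum_subtractf sum_distrib_left)
  finally show ?thesis by simp
qed

lemma Bc_pos: assumes b: "\<beta> \<in> R" shows "Bc \<beta> \<beta> \<ge> 4"
proof -
  have "(\<beta> \<bullet> cor \<beta>) * (\<beta> \<bullet> cor \<beta>) \<le> Bc \<beta> \<beta>"
    unfolding Bc_def using b finC by (intro member_le_sum) auto
  then show ?thesis using two[OF b] by simp
qed

lemma Bc_add: "Bc x (u + v) = Bc x u + Bc x v"
  unfolding Bc_def by (simp add: inner_add_left algebra_simps sum.distrib)

lemma Bc_sign: assumes b: "\<beta> \<in> R" shows "x \<bullet> cor \<beta> > 0 \<longleftrightarrow> Bc x \<beta> > 0"
proof -
  have "Bc \<beta> \<beta> > 0" using Bc_pos[OF b] by simp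
  then show ?thesis using Bc_key[OF b, of x] by (metis zero_less_mult_iff mult_pos_pos zero_less_numeral not_less_iff_gr_or_eq mult_le_0_iff less_le_not_le)
qed

lemma cone:
  assumes QR: "Q \<subseteq> R"
    and simp_pos: "\<forall>\<beta>\<in>simple_roots (pos_roots Q \<xi>). Bc x \<beta> > 0"
    and g: "\<gamma> \<in> pos_roots Q \<xi>"
  shows "Bc x \<gamma> > 0"
proof -
  define PM where "PM = pos_roots Q \<xi>"
  have "finite Q" using finR QR finite_subset by blast
  then have finPM: "finite PM" by (simp add: PM_def pos_roots_def)
  have "\<forall>\<gamma>. \<gamma> \<in> PM \<longrightarrow> card {\<delta>\<in>PM. \<delta> \<bullet> \<xi> < \<gamma> \<bullet> \<xi>} = n \<longrightarrow> Bc x \<gamma> > 0" for n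
  proof (induction n rule: less_induct)
    case (less n)
    show ?case
    proof (intro allI impI)
      fix \<gamma> assume g: "\<gamma> \<in> PM" and n: "card {\<delta>\<in>PM. \<delta> \<bullet> \<xi> < \<gamma> \<bullet> \<xi>} = n"
      show "Bc x \<gamma> > 0"
      proof (cases "\<gamma> \<in> simple_roots PM")
        case True then show ?thesis using simp_pos by (simp add: PM_def)
      next
        case False
        then obtain b1 b2 where b: "b1 \<in> PM" "b2 \<in> PM" "\<gamma> = b1 + b2"
          using g by (auto simp: simple_roots_def)
        have pos: "b1 \<bullet> \<xi> > 0" "b2 \<bullet> \<xi> > 0" using b by (auto simp: PM_def pos_roots_def)
        have lt: "b1 \<bullet> \<xi> < \<gamma> \<bullet> \<xi>" "b2 \<bullet> \<xi> < \<gamma> \<bullet> \<xi>" using b pos by (auto simp: inner_add_left)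
        have IH: "Bc x bi > 0" if bi: "bi \<in> PM" "bi \<bullet> \<xi> < \<gamma> \<bullet> \<xi>" for bi
        proof -
          have sub: "{\<delta>\<in>PM. \<delta> \<bullet> \<xi> < bi \<bullet> \<xi>} \<subset> {\<delta>\<in>PM. \<delta> \<bullet> \<xi> < \<gamma> \<bullet> \<xi>}"
            using bi by auto
          have "card {\<delta>\<in>PM. \<delta> \<bullet> \<xi> < bi \<bullet> \<xi>} < n"
            using psubset_card_mono[OF _ sub] finPM n by auto
          then show ?thesis using less.IH bi(1) by blast
        qed
        show ?thesis using IH[OF b(1) lt(1)] IH[OF b(2) lt(2)] b(3) Bc_add by simp
      qed
    qed
  qed
  then show ?thesis using g by (simp add: PM_def)
qed

end

theorem mainTheorem13:
  fixes X R S :: "'v::euclidean_space set" and cor :: "'v \<Rightarrow> 'v" and \<xi> :: 'v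
    and z w :: "'v \<Rightarrow> 'v" and \<alpha> :: 'v and m :: int
  assumes datum: "reduced_root_datum X R cor"
    and regular: "\<forall>\<beta>\<in>R. \<beta> \<bullet> \<xi> \<noteq> 0"
    and z: "z \<in> ext_affine_weyl cor X (levi_roots R S)"
    and \<alpha>: "\<alpha> \<in> levi_roots R S"
    and len: "alcove_length cor (pos_roots (levi_roots R S) \<xi>) z
              < alcove_length cor (pos_roots (levi_roots R S) \<xi>) (affine_refl cor \<alpha> m \<circ> z)"
    and w: "w \<in> weyl_group cor R"
    and wM: "\<forall>\<beta>\<in>simple_roots (pos_roots (levi_roots R S) \<xi>).
               alcove_length cor (pos_roots R \<xi>) w < alcove_length cor (pos_roots R \<xi>) (refl cor \<beta> \<circ> w)"
  shows "alcove_length cor (pos_roots R \<xi>) (inv w \<circ> z \<circ> w)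
         < alcove_length cor (pos_roots R \<xi>) (inv w \<circ> (affine_refl cor \<alpha> m \<circ> z) \<circ> w)"
proof -
  interpret rd X R cor by unfold_locales (rule datum)
  define LM where "LM = levi_roots R S"
  define P where "P = pos_roots R \<xi>"
  define PM where "PM = pos_roots LM \<xi>"
  define r where "r = affine_refl cor \<alpha> m"
  have QM: "closedQ LM" using closed_levi by (simp add: LM_def)
  have LMR: "LM \<subseteq> R" by (auto simp: LM_def levi_roots_def)
  have regM: "\<forall>\<beta>\<in>LM. \<beta> \<bullet> \<xi> \<noteq> 0" using regular LMR by auto
  have aM_in: "\<alpha> \<in> LM" using \<alpha> by (simp add: LM_def)
  have aR: "\<alpha> \<in> R" using aM_in LMR by auto
  obtain a where a: "a \<in> base_alcove cor (pos_roots R \<xi>)" using alcove_nonempty[OF regular] by auto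
  have gen_a: "\<And>c k. c \<in> cor ` R \<Longrightarrow> a \<bullet> c - of_int k \<noteq> 0"
    using generic_alcove[OF closedR regular a] by blast
  have wt: "\<forall>c\<in>cor ` R. \<exists>c'\<in>cor ` R. \<forall>x. w x \<bullet> c = x \<bullet> c'"
    using weyl_props[OF closedR w] by blast
  have genG: "\<And>c k. c \<in> cor ` R \<Longrightarrow> w a \<bullet> c - of_int k \<noteq> 0"
  proof -
    fix c k assume c: "c \<in> cor ` R"
    then obtain c' where c': "c' \<in> cor ` R" "\<forall>x. w x \<bullet> c = x \<bullet> c'" using wt by blast
    show "w a \<bullet> c - of_int k \<noteq> 0" using gen_a[OF c'(1)] c'(2) by simp
  qed
  have gw: "good R w" using good_weyl[OF closedR w] .
  have simp_pos: "\<forall>\<beta>\<in>simple_roots PM. w a \<bullet> cor \<beta> > 0"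
  proof
    fix \<beta> assume b: "\<beta> \<in> simple_roots PM"
    have bPM: "\<beta> \<in> PM" using b by (simp add: simple_roots_def)
    have bR: "\<beta> \<in> R" and bxi: "\<beta> \<bullet> \<xi> > 0" using bPM LMR by (auto simp: PM_def pos_roots_def)
    have "\<beta> \<in> pos_roots R \<xi>" using bR bxi by (simp add: pos_roots_def)
    then have ab: "a \<bullet> cor \<beta> > 0" using a by (auto simp: base_alcove_def)
    show "w a \<bullet> cor \<beta> > 0"
    proof (rule ccontr)
      assume "\<not> w a \<bullet> cor \<beta> > 0"
      moreover have "w a \<bullet> cor \<beta> \<noteq> 0" using genG[of "cor \<beta>" 0] bR by simp
      ultimately have neg: "w a \<bullet> cor \<beta> < 0" by simp
      have "(a \<bullet> cor \<beta> + of_int 0) * (w a \<bullet> cor \<beta> + of_int 0) < 0" using ab neg by (simp add: mult_pos_neg)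
      from refl_count_neg[OF closedR bR gen_a this]
      have c1: "card (T R a (affine_refl cor \<beta> 0 (w a))) + 2 \<le> card (T R a (w a))" .
      have ar: "affine_refl cor \<beta> 0 = refl cor \<beta>" by (simp add: affine_refl_def fun_eq_iff)
      have sw: "refl cor \<beta> \<circ> w \<in> weyl_group cor R" using w bR by (rule weyl_group.wstep)
      have l1: "card (T R a (w a)) = 2 * alcove_length cor (pos_roots R \<xi>) w"
        using length_T[OF closedR regular a gw] .
      have l2: "card (T R a ((refl cor \<beta> \<circ> w) a)) = 2 * alcove_length cor (pos_roots R \<xi>) (refl cor \<beta> \<circ> w)"
        using length_T[OF closedR regular a good_weyl[OF closedR sw]] .
      have "alcove_length cor (pos_roots R \<xi>) w < alcove_length cor (pos_roots R \<xi>) (refl cor \<beta> \<circ> w)"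
        using wM b by (simp add: PM_def LM_def)
      then show False using c1 l1 l2 ar by simp
    qed
  qed
  have aM: "w a \<in> base_alcove cor PM"
    unfolding base_alcove_def
  proof (intro CollectI ballI conjI)
    fix \<gamma> assume g: "\<gamma> \<in> PM"
    have gR: "\<gamma> \<in> R" using g LMR by (auto simp: PM_def pos_roots_def)
    have "\<forall>\<beta>\<in>simple_roots (pos_roots LM \<xi>). Bc (w a) \<beta> > 0"
    proof
      fix \<beta> assume b: "\<beta> \<in> simple_roots (pos_roots LM \<xi>)"
      have "\<beta> \<in> R" using b LMR by (auto simp: simple_roots_def pos_roots_def)
      then have "w a \<bullet> cor \<beta> > 0 \<longleftrightarrow> Bc (w a) \<beta> > 0" by (rule Bc_sign)
      moreover have "w a \<bullet> cor \<beta> > 0" using simp_pos b by (simp add: PM_def)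
      ultimately show "Bc (w a) \<beta> > 0" by simp
    qed
    then have "Bc (w a) \<gamma> > 0" using cone[OF LMR] g by (simp add: PM_def)
    then show "0 < w a \<bullet> cor \<gamma>" using Bc_sign[OF gR] by simp
    obtain c' where c': "c' \<in> cor ` R" "\<forall>x. w x \<bullet> cor \<gamma> = x \<bullet> c'" using wt gR by blast
    show "w a \<bullet> cor \<gamma> < 1" using alcove_bound[OF regular a c'(1)] c'(2) by simp
  qed
  have genM: "\<And>c k. c \<in> cor ` LM \<Longrightarrow> w a \<bullet> c - of_int k \<noteq> 0"
    using generic_alcove[OF QM regM aM[unfolded PM_def]] by blast
  have gz: "good LM z" using good_ext[OF QM] z by (simp add: LM_def)
  have grz: "good LM (r \<circ> z)" using good_comp[OF good_aref[OF QM aM_in] gz] by (simp add: r_def)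
  have LenM1: "card (T LM (w a) (z (w a))) = 2 * alcove_length cor PM z"
    using length_T[OF QM regM aM[unfolded PM_def] gz] by (simp add: PM_def)
  have LenM2: "card (T LM (w a) ((r \<circ> z) (w a))) = 2 * alcove_length cor PM (r \<circ> z)"
    using length_T[OF QM regM aM[unfolded PM_def] grz] by (simp add: PM_def)
  have lenM: "alcove_length cor PM z < alcove_length cor PM (r \<circ> z)"
    using len by (simp add: PM_def LM_def r_def)
  have hprod: "(w a \<bullet> cor \<alpha> + of_int m) * (z (w a) \<bullet> cor \<alpha> + of_int m) > 0"
  proof (rule ccontr)
    assume nc: "\<not> ?thesis"
    have caM: "cor \<alpha> \<in> cor ` LM" using aM_in by simp
    have h1: "w a \<bullet> cor \<alpha> + of_int m \<noteq> 0" using genM[OF caM, of "- m"] by simp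
    obtain c' k' where c': "c' \<in> cor ` LM" "\<forall>x. z x \<bullet> cor \<alpha> - of_int (- m) = x \<bullet> c' - of_int k'"
      using gz caM unfolding good_def by blast
    have h2: "z (w a) \<bullet> cor \<alpha> + of_int m \<noteq> 0" using genM[OF c'(1), of k'] c'(2) by simp
    have "(w a \<bullet> cor \<alpha> + of_int m) * (z (w a) \<bullet> cor \<alpha> + of_int m) < 0"
      using nc h1 h2 by (simp add: not_less le_less)
    from refl_count_neg[OF QM aM_in genM this]
    have "card (T LM (w a) (r (z (w a)))) + 2 \<le> card (T LM (w a) (z (w a)))" by (simp add: r_def)
    then show False using LenM1 LenM2 lenM by simp
  qed
  have cnt: "card (T R (w a) (z (w a))) + 2 \<le> card (T R (w a) (r (z (w a))))"
    using refl_count[OF closedR aR genG hprod] by (simp add: r_def)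
  have zR: "z \<in> ext_affine_weyl cor X R"
    using z weyl_mono[OF LMR[unfolded LM_def]] by (auto simp: ext_affine_weyl_def)
  have gzR: "good R z" using good_ext[OF closedR zR] .
  have grzR: "good R (r \<circ> z)" using good_comp[OF good_aref[OF closedR aR] gzR] by (simp add: r_def)
  have g1: "good R (inv w \<circ> z \<circ> w)" using good_comp[OF good_comp[OF good_inv[OF w] gzR] gw] .
  have g2: "good R (inv w \<circ> (r \<circ> z) \<circ> w)" using good_comp[OF good_comp[OF good_inv[OF w] grzR] gw] .
  have L1: "card (T R a (inv w (z (w a)))) = 2 * alcove_length cor (pos_roots R \<xi>) (inv w \<circ> z \<circ> w)"
    using length_T[OF closedR regular a g1] by simp
  have L2: "card (T R a (inv w (r (z (w a))))) = 2 * alcove_length cor (pos_roots R \<xi>) (inv w \<circ> (r \<circ> z) \<circ> w)"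
    using length_T[OF closedR regular a g2] by simp
  have "card (T R a (inv w (z (w a)))) + 2 \<le> card (T R a (inv w (r (z (w a)))))"
    using cnt card_transport[OF w] by simp
  then show ?thesis using L1 L2 by (simp add: r_def)
qed

end
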